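(* Let $a\in(0,1/2)$ and $0<\lambda\le\frac{2}{1-2a}$. There exists $C=C(a,\lambda)>0$ such that for all even $N$ (with $\check{\mathcal S}^a_N\ne\emptyset$) $$\frac{\pi^{\lambda,a}_N(\partial\check{\mathcal S}^a_N)}{\pi^{\lambda,a}_N(\check{\mathcal S}^a_N)}\ge CN^{-3}.$$
   Context: $\langle s\rangle$ is the smallest even integer $\ge s$. For $N$ even, $\mathcal S^a_N$ is the set of $\eta=(\eta_x)_{x\in\{0,\dots,N\}}$ with values in $\mathbb Z_{\ge0}$, $\eta_0=\eta_N=\langle aN\rangle$, $|\eta_{x+1}-\eta_x|=1$; $H(\eta)=\#\{x:\eta_x=0\}$; $\pi^{\lambda,a}_N(\eta)=\lambda^{H(\eta)}/\sum_{\eta'\in\mathcal S^a_N}\lambda^{H(\eta')}$. $\check{\mathcal S}^a_N=\{\eta\in\mathcal S^a_N:\exists x,\ \eta_x=0\}$, and $\partial\check{\mathcal S}^a_N$ is the set of $\eta\in\mathcal S^a_N$ with exactly one contact, i.e. $H(\eta)=1$ (equivalently, the paths of $\check{\mathcal S}^a_N$ from which the corner-flip dynamics can jump outside $\check{\mathcal S}^a_N$). *)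

theory Defs
  imports Complex_Main
begin

definition even_ceil :: "real \<Rightarrow> int" where
  "even_ceil s = (LEAST k::int. even k \<and> s \<le> real_of_int k)"

definition paths :: "real \<Rightarrow> nat \<Rightarrow> int list set" where
  "paths a N = {\<eta>. length \<eta> = N + 1
      \<and> (\<forall>x\<le>N. \<eta> ! x \<ge> 0)
      \<and> \<eta> ! 0 = even_ceil (a * real N) \<and> \<eta> ! N = even_ceil (a * real N)
      \<and> (\<forall>x<N. \<bar>\<eta> ! (x + 1) - \<eta> ! x\<bar> = 1)}"

definition contacts :: "nat \<Rightarrow> int list \<Rightarrow> nat" where
  "contacts N \<eta> = card {x. x \<le> N \<and> \<eta> ! x = 0}"

definition pin :: "real \<Rightarrow> real \<Rightarrow> nat \<Rightarrow> int list set \<Rightarrow> real" where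
  "pin lam a N A = (\<Sum>\<eta>\<in>A \<inter> paths a N. lam ^ contacts N \<eta>) / (\<Sum>\<eta>\<in>paths a N. lam ^ contacts N \<eta>)"

definition check_paths :: "real \<Rightarrow> nat \<Rightarrow> int list set" where
  "check_paths a N = {\<eta> \<in> paths a N. \<exists>x\<le>N. \<eta> ! x = 0}"

definition bd_check_paths :: "real \<Rightarrow> nat \<Rightarrow> int list set" where
  "bd_check_paths a N = {\<eta> \<in> paths a N. contacts N \<eta> = 1}"

end

theory Submission
  imports Defs
begin

fun hts :: "int \<Rightarrow> bool list \<Rightarrow> int list" where
  "hts y [] = [y]"
| "hts y (b # bs) = y # hts (if b then y + 1 else y - 1) bs"

definition ssum :: "bool list \<Rightarrow> int" where
  "ssum bs = (\<Sum>b\<leftarrow>bs. if b then 1 else -1)"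

lemma ssum_Nil[simp]: "ssum [] = 0" by (simp add: ssum_def)
lemma ssum_Cons[simp]: "ssum (b#bs) = (if b then 1 else -1) + ssum bs" by (simp add: ssum_def)
lemma ssum_append[simp]: "ssum (xs@ys) = ssum xs + ssum ys" by (simp add: ssum_def)
lemma ssum_map_Not[simp]: "ssum (map Not bs) = - ssum bs" by (induction bs) auto
lemma length_hts[simp]: "length (hts y bs) = Suc (length bs)" by (induction bs arbitrary: y) auto
lemma hts_nonempty[simp]: "hts y bs \<noteq> []" by (cases bs) auto
lemma hts_hd: "hts y bs = y # tl (hts y bs)" by (cases bs) auto
lemma last_hts[simp]: "last (hts y bs) = y + ssum bs"
  by (induction bs arbitrary: y) (auto simp: hts_hd[symmetric])
lemma nth_hts: "j \<le> length bs \<Longrightarrow> hts y bs ! j = y + ssum (take j bs)"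
proof (induction bs arbitrary: y j)
  case Nil thus ?case by simp
next
  case (Cons b bs) thus ?case by (cases j) auto
qed
lemma hts_append: "hts y (a @ b) = butlast (hts y a) @ hts (y + ssum a) b"
proof (induction a arbitrary: y)
  case Nil thus ?case by simp
next
  case (Cons x a) thus ?case by (simp add: algebra_simps)
qed
lemma hts_take: "hts y (take k bs) = take (Suc k) (hts y bs)"
proof (induction bs arbitrary: y k)
  case Nil thus ?case by simp
next
  case (Cons b bs) thus ?case by (cases k) auto
qed
lemma hts_drop: "k \<le> length bs \<Longrightarrow> hts (y + ssum (take k bs)) (drop k bs) = drop k (hts y bs)"
proof -
  assume k: "k \<le> length bs"
  have "hts y bs = butlast (hts y (take k bs)) @ hts (y + ssum (take k bs)) (drop k bs)"
    using hts_append[of y "take k bs" "drop k bs"] by simp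
  moreover have "length (butlast (hts y (take k bs))) = k" using k by simp
  ultimately show ?thesis by (metis append_eq_conv_conj)
qed
lemma ssum_take_Suc: "i < length bs \<Longrightarrow> ssum (take (Suc i) bs) = ssum (take i bs) + (if bs ! i then 1 else -1)"
  by (simp add: take_Suc_conv_app_nth)
lemma hts_step: "i < length bs \<Longrightarrow> \<bar>hts y bs ! Suc i - hts y bs ! i\<bar> = 1"
  by (simp add: nth_hts ssum_take_Suc)
lemma abs_ssum_le: "\<bar>ssum bs\<bar> \<le> int (length bs)"
  by (induction bs) auto
lemma ssum_count: "ssum bs = 2 * int (count_list bs True) - int (length bs)"
  by (induction bs) auto

lemma card_count: "card {bs. length bs = n \<and> count_list bs True = k} = n choose k"
proof (induction n arbitrary: k)
  case 0
  have "{bs::bool list. length bs = 0 \<and> count_list bs True = k} = (if k = 0 then {[]} else {})" by auto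
  thus ?case by simp
next
  case (Suc n)
  show ?case
  proof (cases k)
    case 0
    have "{bs. length bs = Suc n \<and> count_list bs True = 0} = {replicate (Suc n) False}"
    proof (safe)
      fix bs :: "bool list" assume "length bs = Suc n" "count_list bs True = 0"
      thus "bs = replicate (Suc n) False"
        by (metis (full_types) count_list_0_iff replicate_length_same)
    qed (simp_all add: count_list_0_iff)
    thus ?thesis using 0 by simp
  next
    case (Suc j)
    have eq: "{bs. length bs = Suc n \<and> count_list bs True = Suc j} =
      (Cons True) ` {bs. length bs = n \<and> count_list bs True = j} \<union>
      (Cons False) ` {bs. length bs = n \<and> count_list bs True = Suc j}"
    proof (safe)
      fix bs :: "bool list" assume a: "length bs = Suc n" "count_list bs True = Suc j"
        "bs \<notin> (#) False ` {bs. length bs = n \<and> count_list bs True = Suc j}"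
      then obtain b cs where bs: "bs = b # cs" by (cases bs) auto
      thus "bs \<in> (#) True ` {bs. length bs = n \<and> count_list bs True = j}" using a
        by (cases b) auto
    qed auto
    have "card {bs. length bs = Suc n \<and> count_list bs True = Suc j} = card ((Cons True) ` {bs. length bs = n \<and> count_list bs True = j}) +
        card ((Cons False) ` {bs. length bs = n \<and> count_list bs True = Suc j})"
      unfolding eq
      by (rule card_Un_disjoint) (auto intro!: finite_imageI finite_subset[OF _ finite_lists_length_eq[of "UNIV::bool set" n]])
    also have "\<dots> = (n choose j) + (n choose Suc j)"
      by (simp add: card_image Suc.IH)
    finally show ?thesis using Suc by simp
  qed
qed

definition zc :: "int list \<Rightarrow> nat" where "zc xs = length (filter (\<lambda>v. v = 0) xs)"
lemma zc_Nil[simp]: "zc [] = 0" by (simp add: zc_def)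
lemma zc_Cons[simp]: "zc (v # xs) = (if v = 0 then 1 else 0) + zc xs" by (simp add: zc_def)
lemma zc_append[simp]: "zc (xs @ ys) = zc xs + zc ys" by (simp add: zc_def)
lemma zc_pos: "\<forall>v\<in>set xs. 0 < v \<Longrightarrow> zc xs = 0" by (simp add: zc_def filter_empty_conv) (metis less_irrefl)

definition NN :: "nat \<Rightarrow> int \<Rightarrow> bool list set" where
  "NN n y = {w. length w = n \<and> (\<forall>v\<in>set (hts y w). 0 \<le> v)}"

lemma finite_len: "finite {w::bool list. length w = n}"
  using finite_lists_length_eq[of "UNIV::bool set" n] by simp

lemma finite_NN: "finite (NN n y)"
  by (rule finite_subset[OF _ finite_len[of n]]) (auto simp: NN_def)

lemma hd_in_hts: "y \<in> set (hts y u)" by (cases u) auto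

lemma NN_Suc: "0 \<le> y \<Longrightarrow> NN (Suc n) y = Cons True ` NN n (y+1) \<union> Cons False ` (if 1 \<le> y then NN n (y-1) else {})"
proof (rule set_eqI)
  fix w assume y: "0 \<le> y"
  show "w \<in> NN (Suc n) y \<longleftrightarrow> w \<in> Cons True ` NN n (y+1) \<union> Cons False ` (if 1 \<le> y then NN n (y-1) else {})"
  proof (cases w)
    case Nil thus ?thesis by (auto simp: NN_def)
  next
    case (Cons b u)
    show ?thesis
    proof (cases b)
      case True thus ?thesis using Cons y by (auto simp: NN_def)
    next
      case False
      have "(\<forall>v\<in>set (hts (y-1) u). 0 \<le> v) \<Longrightarrow> 1 \<le> y" using hd_in_hts[of "y-1" u] by fastforce
      thus ?thesis using Cons y False by (auto simp: NN_def)
    qed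
  qed
qed

lemma potential:
  fixes lam mu :: real and g :: "int \<Rightarrow> real"
  assumes lam: "lam > 0" and mu: "mu \<ge> 0" and gnn: "\<And>y. 0 \<le> y \<Longrightarrow> g y \<ge> 0"
    and gp: "\<And>y. 0 \<le> y \<Longrightarrow> g (y+1) + (if 1 \<le> y then (if y = 1 then lam else 1) * g (y-1) else 0) \<le> mu * g y"
  shows "0 \<le> y \<Longrightarrow> (\<Sum>w\<in>NN n y. lam ^ zc (tl (hts y w)) * g (last (hts y w))) \<le> mu^n * g y"
proof (induction n arbitrary: y)
  case 0
  have "NN 0 y = {[]}" using 0 by (auto simp: NN_def)
  thus ?case by simp
next
  case (Suc n)
  let ?F = "\<lambda>y w. lam ^ zc (tl (hts y w)) * g (last (hts y w))"
  have FC: "?F y (b # w) = (if (if b then y + 1 else y - 1) = 0 then lam else 1) * ?F (if b then y + 1 else y - 1) w" for b w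
  proof -
    let ?y = "if b then y + 1 else y - 1"
    have "zc (hts ?y w) = (if ?y = 0 then 1 else 0) + zc (tl (hts ?y w))"
      by (subst hts_hd) simp
    thus ?thesis by (simp add: power_add)
  qed
  have d: "NN (Suc n) y = Cons True ` NN n (y+1) \<union> Cons False ` (if 1 \<le> y then NN n (y-1) else {})"
    using NN_Suc[OF Suc.prems] .
  have "sum (?F y) (NN (Suc n) y) = sum (?F y) (Cons True ` NN n (y+1)) + sum (?F y) (Cons False ` (if 1 \<le> y then NN n (y-1) else {}))"
    unfolding d by (rule sum.union_disjoint) (auto intro: finite_NN)
  also have "\<dots> = sum (?F y \<circ> Cons True) (NN n (y+1)) + sum (?F y \<circ> Cons False) (if 1 \<le> y then NN n (y-1) else {})"
    by (simp add: sum.reindex)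
  also have "sum (?F y \<circ> Cons True) (NN n (y+1)) = sum (?F (y+1)) (NN n (y+1))"
  proof (intro sum.cong refl)
    fix w show "(?F y \<circ> Cons True) w = ?F (y+1) w" using FC[of True w] Suc.prems by (simp only: o_apply) simp
  qed
  also have "\<dots> \<le> mu ^ n * g (y+1)" using Suc.IH[of "y+1"] Suc.prems by simp
  also have "sum (?F y \<circ> Cons False) (if 1 \<le> y then NN n (y-1) else {})
      \<le> (if 1 \<le> y then mu ^ n * ((if y = 1 then lam else 1) * g (y-1)) else 0)"
  proof (cases "1 \<le> y")
    case True
    have "sum (?F y \<circ> Cons False) (NN n (y-1)) = (if y - 1 = 0 then lam else 1) * sum (?F (y-1)) (NN n (y-1))"
      unfolding sum_distrib_left by (intro sum.cong refl) (simp only: o_apply FC[of False] if_False)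
    also have "\<dots> \<le> (if y - 1 = 0 then lam else 1) * (mu ^ n * g (y-1))"
      using Suc.IH[of "y-1"] True lam by (intro mult_left_mono) auto
    finally show ?thesis using True by (simp add: algebra_simps)
  qed simp
  also have "mu ^ n * g (y+1) + (if 1 \<le> y then mu ^ n * ((if y = 1 then lam else 1) * g (y-1)) else 0)
      = mu ^ n * (g (y+1) + (if 1 \<le> y then (if y = 1 then lam else 1) * g (y-1) else 0))"
    by (simp add: algebra_simps)
  also have "\<dots> \<le> mu ^ n * (mu * g y)" using gp[OF Suc.prems] mu by (intro mult_left_mono) auto
  finally show ?case by (simp add: algebra_simps)
qed

definition Mid :: "nat \<Rightarrow> bool list set" where
  "Mid m = {w. length w = m \<and> ssum w = 0 \<and> (\<forall>v\<in>set (hts 0 w). 0 \<le> v)}"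

lemma finite_Mid: "finite (Mid m)"
  by (rule finite_subset[OF _ finite_len[of m]]) (auto simp: Mid_def)

lemma W_bound:
  fixes lam mu :: real and g :: "int \<Rightarrow> real"
  assumes lam: "lam > 0" and mu: "mu \<ge> 0" and gnn: "\<And>y. 0 \<le> y \<Longrightarrow> g y \<ge> 0" and g0: "g 0 > 0"
    and gp: "\<And>y. 0 \<le> y \<Longrightarrow> g (y+1) + (if 1 \<le> y then (if y = 1 then lam else 1) * g (y-1) else 0) \<le> mu * g y"
  shows "(\<Sum>w\<in>Mid m. lam ^ zc (hts 0 w)) \<le> lam * mu ^ m"
proof -
  let ?F = "\<lambda>w. lam ^ zc (tl (hts 0 w)) * g (last (hts 0 w))"
  have e: "lam ^ zc (hts 0 w) * g 0 = lam * ?F w" if "w \<in> Mid m" for w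
  proof -
    have "zc (hts 0 w) = 1 + zc (tl (hts 0 w))" by (subst hts_hd) simp
    moreover have "last (hts 0 w) = 0" using that by (simp add: Mid_def)
    ultimately show ?thesis by (simp add: power_add)
  qed
  have "(\<Sum>w\<in>Mid m. lam ^ zc (hts 0 w)) * g 0 = lam * (\<Sum>w\<in>Mid m. ?F w)"
    by (simp add: sum_distrib_left sum_distrib_right e)
  also have "(\<Sum>w\<in>Mid m. ?F w) \<le> (\<Sum>w\<in>NN m 0. ?F w)"
  proof (rule sum_mono2[OF finite_NN])
    show "Mid m \<subseteq> NN m 0" by (auto simp: Mid_def NN_def)
    fix w assume "w \<in> NN m 0 - Mid m"
    hence "\<forall>x\<in>set (hts 0 w). 0 \<le> x" by (auto simp: NN_def)
    hence "0 \<le> last (hts 0 w)" using last_in_set[OF hts_nonempty] by blast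
    thus "0 \<le> ?F w" using lam gnn by simp
  qed
  also have "\<dots> \<le> mu ^ m * g 0" by (rule potential[OF lam mu gnn gp]) auto
  finally have "(\<Sum>w\<in>Mid m. lam ^ zc (hts 0 w)) * g 0 \<le> (lam * mu ^ m) * g 0"
    using lam by (simp add: algebra_simps mult_left_mono)
  thus ?thesis using g0 by simp
qed

lemma exists_pot:
  fixes a lam :: real
  assumes a: "0 < a" "a < 1/2" and lam: "0 < lam" "lam \<le> 2 / (1 - 2 * a)"
  shows "\<exists>mu g. mu > 0 \<and> 4 \<le> mu^2 \<and> mu^2 * (1 - 4 * a^2) \<le> 4 \<and> g 0 > (0::real) \<and> (\<forall>y\<ge>0. g y \<ge> 0) \<and>
     (\<forall>y::int\<ge>0. g (y+1) + (if 1 \<le> y then (if y = 1 then lam else 1) * g (y-1) else 0) \<le> mu * g y)"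
proof (cases "lam \<ge> 2")
  case True
  define r where "r = 1 / sqrt (lam - 1)"
  have rp: "r > 0" using True by (simp add: r_def)
  have r2: "r^2 * (lam - 1) = 1" using True by (simp add: r_def power_divide)
  define g where "g y = (if y = 0 then 1/lam else r ^ nat y)" for y :: int
  have lu: "lam * (1 - 2*a) \<le> 2" using lam a by (simp add: field_simps)
  have key: "lam^2 * (1 - 4*a^2) \<le> 4 * (lam - 1)"
  proof -
    define t where "t = lam * (1 - 2*a)"
    have "lam^2 * (1 - 4*a^2) = 2*lam*t - t^2" by (simp add: t_def power2_eq_square algebra_simps)
    moreover have "(t - 2) * (2*lam - t - 2) \<le> 0"
      using lu True a by (intro mult_nonpos_nonneg) (auto simp: t_def)
    ultimately show ?thesis by (simp add: algebra_simps power2_eq_square)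
  qed
  show ?thesis
  proof (intro exI conjI allI impI)
    show "lam * r > 0" using rp lam by simp
    have m2: "(lam * r)^2 * (lam - 1) = lam^2" using r2 by (simp add: power_mult_distrib)
    show "4 \<le> (lam * r)^2"
    proof -
      have "0 \<le> (lam - 2)^2" by simp
      hence "4 * (lam - 1) \<le> lam^2" by (simp add: power2_eq_square algebra_simps)
      hence "4 * (lam - 1) \<le> (lam * r)^2 * (lam - 1)" using m2 by simp
      thus ?thesis using True mult_le_cancel_right_pos[of "lam - 1" 4 "(lam*r)^2"] by simp
    qed
    show "(lam * r)^2 * (1 - 4 * a^2) \<le> 4"
    proof -
      have "(lam * r)^2 * (1 - 4 * a^2) * (lam - 1) = ((lam * r)^2 * (lam - 1)) * (1 - 4*a^2)" by (simp only: ac_simps)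
      also have "\<dots> = lam^2 * (1 - 4*a^2)" using m2 by simp
      also have "\<dots> \<le> 4 * (lam - 1)" by (rule key)
      finally show ?thesis using True mult_le_cancel_right_pos[of "lam - 1" "(lam * r)^2 * (1 - 4 * a^2)" 4] by simp
    qed
    show "g 0 > 0" using lam by (simp add: g_def)
    fix y :: int assume y: "0 \<le> y"
    show "g y \<ge> 0" using rp lam by (simp add: g_def)
    show "g (y+1) + (if 1 \<le> y then (if y = 1 then lam else 1) * g (y-1) else 0) \<le> lam * r * g y"
    proof (cases "y = 0")
      case True thus ?thesis using lam by (simp add: g_def)
    next
      case False
      define k where "k = nat (y - 1)"
      have k: "y = int k + 1" using y False by (simp add: k_def)
      have "r^(k+2) + r^k = r^k * (r^2 + 1)" by (simp add: power_add power2_eq_square algebra_simps)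
      also have "r^2 + 1 = lam * r^2" using r2 by (simp add: algebra_simps)
      finally have ee: "r^(k+2) + r^k = lam * r * r^(k+1)" by (simp add: power_add power2_eq_square algebra_simps)
      show ?thesis
      proof (cases "k = 0")
        case True
        thus ?thesis using k ee lam by (simp add: g_def nat_add_distrib power2_eq_square)
      next
        case False
        thus ?thesis using k ee by (simp add: g_def nat_add_distrib add.commute)
      qed
    qed
  qed
next
  case False
  define g where "g y = (if y = 0 then 1/lam else 1)" for y :: int
  show ?thesis
  proof (intro exI conjI allI impI)
    show "(2::real) > 0" by simp
    show "4 \<le> (2::real)^2" by simp
    show "2^2 * (1 - 4 * a^2) \<le> 4" using a by simp
    show "g 0 > 0" using lam by (simp add: g_def)
    fix y :: int assume y: "0 \<le> y"
    show "g y \<ge> 0" using lam by (simp add: g_def)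
    show "g (y+1) + (if 1 \<le> y then (if y = 1 then lam else 1) * g (y-1) else 0) \<le> 2 * g y"
      using False lam y by (auto simp: g_def field_simps)
  qed
qed

definition FP :: "int \<Rightarrow> bool list \<Rightarrow> bool" where
  "FP h p \<longleftrightarrow> ssum p = -h \<and> (\<forall>v\<in>set (butlast (hts h p)). 0 < v)"
definition RP :: "int \<Rightarrow> bool list \<Rightarrow> bool" where
  "RP h r \<longleftrightarrow> ssum r = h \<and> (\<forall>v\<in>set (tl (hts 0 r)). 0 < v)"

definition PB :: "int \<Rightarrow> nat \<Rightarrow> bool list set" where
  "PB h N = {bs. length bs = N \<and> (\<forall>v\<in>set (hts h bs). 0 \<le> v) \<and> ssum bs = 0}"
definition CB :: "int \<Rightarrow> nat \<Rightarrow> bool list set" where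
  "CB h N = {bs \<in> PB h N. 0 \<in> set (hts h bs)}"
definition BDB :: "int \<Rightarrow> nat \<Rightarrow> bool list set" where
  "BDB h N = {bs \<in> PB h N. zc (hts h bs) = 1}"

lemma take_of_append: "p1 @ x = p2 @ y \<Longrightarrow> length p1 \<le> length p2 \<Longrightarrow> p1 = take (length p1) p2"
proof -
  assume e: "p1 @ x = p2 @ y" and l: "length p1 \<le> length p2"
  have "take (length p1) (p1 @ x) = take (length p1) (p2 @ y)" using e by simp
  thus ?thesis using l by simp
qed

lemma FP_unique_aux: "FP h p1 \<Longrightarrow> FP h p2 \<Longrightarrow> p1 @ x = p2 @ y \<Longrightarrow> length p1 \<le> length p2 \<Longrightarrow> p1 = p2"
proof -
  assume f1: "FP h p1" and f2: "FP h p2" and e: "p1 @ x = p2 @ y" and l: "length p1 \<le> length p2"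
  have t: "p1 = take (length p1) p2" using take_of_append[OF e l] .
  show ?thesis
  proof (cases "length p1 = length p2")
    case True thus ?thesis using t by simp
  next
    case False
    hence lt: "length p1 < length p2" using l by simp
    have "hts h p2 ! length p1 = h + ssum (take (length p1) p2)" using lt by (simp add: nth_hts)
    hence "hts h p2 ! length p1 = h + ssum p1" using t by simp
    hence z: "hts h p2 ! length p1 = 0" using f1 by (simp add: FP_def)
    have "butlast (hts h p2) ! length p1 = hts h p2 ! length p1" using lt by (simp add: nth_butlast)
    moreover have "butlast (hts h p2) ! length p1 \<in> set (butlast (hts h p2))" using lt by (intro nth_mem) simp
    ultimately show ?thesis using z f2 by (auto simp: FP_def)
  qed
qed

lemma FP_unique: "FP h p1 \<Longrightarrow> FP h p2 \<Longrightarrow> p1 @ x = p2 @ y \<Longrightarrow> p1 = p2"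
proof -
  assume a: "FP h p1" "FP h p2" "p1 @ x = p2 @ y"
  show ?thesis
  proof (cases "length p1 \<le> length p2")
    case True thus ?thesis using FP_unique_aux[OF a] by simp
  next
    case False thus ?thesis using FP_unique_aux[OF a(2) a(1) a(3)[symmetric]] by simp
  qed
qed

lemma zc_glue: "FP h p \<Longrightarrow> ssum w = 0 \<Longrightarrow> RP h r \<Longrightarrow> zc (hts h (p @ w @ r)) = zc (hts 0 w)"
proof -
  assume f: "FP h p" and w: "ssum w = 0" and r: "RP h r"
  have "hts h (p @ w @ r) = butlast (hts h p) @ butlast (hts 0 w) @ hts 0 r"
    using f w by (simp add: hts_append FP_def)
  moreover have "zc (butlast (hts h p)) = 0" using f by (intro zc_pos) (simp add: FP_def)
  moreover have "zc (hts 0 r) = 1" using r by (subst hts_hd) (simp add: zc_pos RP_def)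
  moreover have "zc (hts 0 w) = zc (butlast (hts 0 w)) + 1"
  proof -
    have "hts 0 w = butlast (hts 0 w) @ [last (hts 0 w)]" by (rule append_butlast_last_id[OF hts_nonempty, symmetric])
    hence "zc (hts 0 w) = zc (butlast (hts 0 w) @ [last (hts 0 w)])" by simp
    thus ?thesis using w by simp
  qed
  ultimately show ?thesis by simp
qed

lemma decomp:
  assumes h: "h > 0" and bs: "bs \<in> CB h N"
  shows "\<exists>p w r. bs = p @ w @ r \<and> FP h p \<and> w \<in> Mid (length w) \<and> RP h r"
proof -
  define H where "H = hts h bs"
  have lb: "length bs = N" and nn: "\<forall>v\<in>set H. 0 \<le> v" and s0: "ssum bs = 0" and z: "0 \<in> set H"
    using bs by (auto simp: CB_def PB_def H_def)
  have lH: "length H = Suc N" using lb by (simp add: H_def)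
  obtain i0 where i0: "i0 \<le> N" "H ! i0 = 0" using z lH by (metis in_set_conv_nth less_Suc_eq_le)
  define P where "P i \<longleftrightarrow> i \<le> N \<and> H ! i = 0" for i
  define i1 where "i1 = (LEAST i. P i)"
  define i2 where "i2 = (GREATEST i. P i)"
  have Pi0: "P i0" using i0 by (simp add: P_def)
  have bnd: "\<And>y. P y \<Longrightarrow> y \<le> N" by (simp add: P_def)
  have P1: "P i1" unfolding i1_def by (rule LeastI[of P, OF Pi0])
  have P2: "P i2" unfolding i2_def by (rule GreatestI_nat[of P, OF Pi0 bnd])
  have le12: "i1 \<le> i2" unfolding i1_def by (rule Least_le[of P, OF P2])
  have before: "H ! j \<noteq> 0" if j: "j < i1" for j
  proof
    assume "H ! j = 0"
    hence "P j" using j P1 by (simp add: P_def)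
    hence "i1 \<le> j" unfolding i1_def by (rule Least_le)
    thus False using j by simp
  qed
  have after: "H ! j \<noteq> 0" if j: "i2 < j" "j \<le> N" for j
  proof
    assume "H ! j = 0"
    hence "P j" using j by (simp add: P_def)
    hence "j \<le> i2" unfolding i2_def by (rule Greatest_le_nat[of P j N, OF _ bnd])
    thus False using j by simp
  qed
  have Hnn: "\<And>j. j \<le> N \<Longrightarrow> 0 \<le> H ! j" using nn lH by (simp add: nth_mem)
  define p where "p = take i1 bs"
  define w where "w = take (i2 - i1) (drop i1 bs)"
  define r where "r = drop i2 bs"
  have split: "bs = p @ w @ r"
  proof -
    have "drop (i2 - i1) (drop i1 bs) = drop i2 bs" using le12 by simp
    thus ?thesis unfolding p_def w_def r_def by (metis append_take_drop_id)
  qed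
  have H1: "H ! i1 = h + ssum (take i1 bs)" unfolding H_def using P1 lb by (intro nth_hts) (simp add: P_def)
  have H2: "H ! i2 = h + ssum (take i2 bs)" unfolding H_def using P2 lb by (intro nth_hts) (simp add: P_def)
  have FPp: "FP h p"
  proof -
    have "ssum p = -h" using H1 P1 by (simp add: p_def P_def)
    moreover have "butlast (hts h p) = take i1 H" using P1 lb
      by (simp add: p_def hts_take H_def butlast_take P_def)
    moreover have "\<forall>v\<in>set (take i1 H). 0 < v"
    proof
      fix v assume "v \<in> set (take i1 H)"
      then obtain j where j: "j < i1" "v = H ! j" using P1 lH by (auto simp: in_set_conv_nth P_def)
      thus "0 < v" using before[OF j(1)] Hnn[of j] P1 by (auto simp: P_def)
    qed
    ultimately show ?thesis by (simp add: FP_def)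
  qed
  have hr: "hts 0 (drop i1 bs) = drop i1 H" using hts_drop[of i1 bs h] P1 lb H1 by (simp add: H_def P_def)
  have Midw: "w \<in> Mid (length w)"
  proof -
    have hw: "hts 0 w = take (Suc (i2 - i1)) (drop i1 H)" by (simp add: w_def hts_take hr)
    have "\<forall>v\<in>set (hts 0 w). 0 \<le> v" using nn unfolding hw by (meson in_set_dropD in_set_takeD)
    moreover have "ssum w = 0"
    proof -
      have "hts 0 (drop i1 bs) ! (i2 - i1) = 0 + ssum w" unfolding w_def
        using P2 lb le12 by (intro nth_hts) (simp add: P_def, linarith)
      also have "hts 0 (drop i1 bs) ! (i2 - i1) = H ! i2" using hr le12 P2 lH by (simp add: P_def)
      finally show ?thesis using P2 by (simp add: P_def)
    qed
    ultimately show ?thesis by (simp add: Mid_def)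
  qed
  have RPr: "RP h r"
  proof -
    have hr2: "hts 0 r = drop i2 H" using hts_drop[of i2 bs h] P2 lb H2 by (simp add: H_def P_def r_def)
    have "last (drop i2 H) = last H" using P2 lH by (simp add: P_def)
    also have "last H = h" using s0 by (simp add: H_def)
    finally have "ssum r = h" using hr2 last_hts[of 0 r] by simp
    moreover have "\<forall>v\<in>set (tl (hts 0 r)). 0 < v"
    proof
      fix v assume "v \<in> set (tl (hts 0 r))"
      hence "v \<in> set (drop (Suc i2) H)" by (simp add: hr2 drop_Suc tl_drop)
      then obtain j where j: "Suc i2 + j < length H" "v = H ! (Suc i2 + j)" by (auto simp: in_set_conv_nth) (metis add_Suc less_diff_conv add.commute)
      have "Suc i2 + j \<le> N" using j(1) lH by simp
      thus "0 < v" using after[of "Suc i2 + j"] Hnn[of "Suc i2 + j"] j(2) by simp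
    qed
    ultimately show ?thesis by (simp add: RP_def)
  qed
  show ?thesis using split FPp Midw RPr by blast
qed

definition SS :: "int \<Rightarrow> nat \<Rightarrow> bool list set" where
  "SS h n = {s. length s = n \<and> ssum s = -2*h}"

lemma finite_SS: "finite (SS h n)"
  by (rule finite_subset[OF _ finite_len[of n]]) (auto simp: SS_def)

lemma SS_nonempty: "s \<in> SS h n \<Longrightarrow> h \<ge> 0 \<Longrightarrow> even n \<and> 2*h \<le> int n"
proof -
  assume s: "s \<in> SS h n" and h: "h \<ge> 0"
  have e: "2 * int (count_list s True) - int n = -2*h" using s ssum_count[of s] by (simp add: SS_def)
  hence "int n = 2 * (int (count_list s True) + h)" by simp
  hence "even (int n)" by (metis dvd_triv_left)
  moreover have "2*h \<le> int n" using e by simp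
  ultimately show ?thesis by simp
qed

lemma card_SS:
  assumes h: "h \<ge> 0" and n: "even n" "2*h \<le> int n"
  shows "card (SS h n) = n choose (n div 2 - nat h)"
proof -
  have "SS h n = {bs. length bs = n \<and> count_list bs True = n div 2 - nat h}"
  proof -
    obtain q where q: "n = 2*q" using n(1) by (auto elim: evenE)
    have hq: "nat h \<le> q" using n(2) q by simp
    have "ssum s = -2*h \<longleftrightarrow> count_list s True = n div 2 - nat h" if "length s = n" for s
    proof -
      have "ssum s = 2 * int (count_list s True) - 2 * int q" using ssum_count[of s] that q by simp
      moreover have "n div 2 - nat h = q - nat h" using q by simp
      moreover have "int (q - nat h) = int q - h" using hq h by simp
      note 1 = calculation
      show ?thesis
      proof
        assume "ssum s = -2*h"
        hence "int (count_list s True) = int q - h" using 1 by linarith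
        hence "int (count_list s True) = int (q - nat h)" using hq h by simp
        thus "count_list s True = n div 2 - nat h" using q by simp
      next
        assume "count_list s True = n div 2 - nat h"
        hence "int (count_list s True) = int q - h" using hq h q by simp
        thus "ssum s = -2*h" using 1 by linarith
      qed
    qed
    thus ?thesis by (auto simp: SS_def)
  qed
  thus ?thesis by (simp add: card_count)
qed

lemma binom_step_nat:
  assumes "k \<le> n"
  shows "(Suc (Suc n) choose Suc k) * Suc k * (Suc n - k) = (n choose k) * Suc n * Suc (Suc n)"
proof -
  have a: "Suc (Suc n) * (Suc n choose k) = (Suc (Suc n) choose Suc k) * Suc k"
    by (rule Suc_times_binomial_eq)
  have b: "(Suc n - k) * (Suc n choose k) = Suc n * (n choose k)"
    using binomial_absorb_comp[of "Suc n" k] by simp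
  have "(Suc (Suc n) choose Suc k) * Suc k * (Suc n - k) = Suc (Suc n) * ((Suc n - k) * (Suc n choose k))"
    unfolding a[symmetric] by (metis mult.assoc mult.commute)
  also have "\<dots> = (n choose k) * Suc n * Suc (Suc n)" unfolding b by (metis mult.assoc mult.commute)
  finally show ?thesis .
qed

definition GG :: "real \<Rightarrow> nat \<Rightarrow> nat \<Rightarrow> real" where
  "GG mu hh n = real (n choose (n div 2 - hh)) * real (n + 1) / mu ^ n"

lemma GG_step:
  fixes mu :: real
  assumes mu: "mu > 0" "4 \<le> mu^2" "mu^2 * (real N^2 - 4 * real hh^2) \<le> 4 * real N^2"
    and n: "even n" "2*hh \<le> n" "n + 2 \<le> N"
  shows "GG mu hh n \<le> GG mu hh (n+2)"
proof -
  define k where "k = n div 2 - hh"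
  have kn: "k \<le> n" by (simp add: k_def)
  have k2: "(n+2) div 2 - hh = Suc k" using n by (simp add: k_def)
  obtain q where q: "n = 2*q" using n(1) by (auto elim: evenE)
  have kq: "k = q - hh" using q by (simp add: k_def)
  have e2k: "2 * real k = real n - 2 * real hh" using n(2) q kq by (simp add: of_nat_diff)
  have id: "real (Suc (Suc n) choose Suc k) * (real k + 1) * (real n + 1 - real k) = real (n choose k) * (real n + 1) * (real n + 2)"
  proof -
    have "real ((Suc (Suc n) choose Suc k) * Suc k * (Suc n - k)) = real ((n choose k) * Suc n * Suc (Suc n))"
      using binom_step_nat[OF kn] by (simp only:)
    moreover have "real (Suc n - k) = real n + 1 - real k" using kn by (simp add: of_nat_diff)
    ultimately show ?thesis by (simp only: of_nat_mult of_nat_Suc) (simp add: algebra_simps)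
  qed
  define C0 where "C0 = real (n choose k)"
  define C2 where "C2 = real (Suc (Suc n) choose Suc k)"
  define D where "D = (real k + 1) * (real n + 1 - real k)"
  have C0p: "C0 > 0" using kn by (simp add: C0_def)
  have Dp: "D > 0" using kn by (simp add: D_def)
  have T: "real n + 2 \<le> real N" using n by linarith
  have a1: "(mu^2 - 4) * (real n + 2)^2 \<le> (mu^2 - 4) * real N^2"
    using mu(2) T by (intro mult_left_mono power_mono) auto
  have nk: "real n = 2 * real k + 2 * real hh" using e2k by simp
  have a2: "4 * D = (real n + 2)^2 - 4 * real hh^2" unfolding D_def nk by (simp add: power2_eq_square algebra_simps)
  define M where "M = mu^2"
  define X where "X = (real n + 2)^2"
  define Y where "Y = real N^2"
  define Z where "Z = real hh^2"
  have a2': "4 * D = X - 4 * Z" using a2 by (simp add: X_def Z_def)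
  have b1: "M * (4 * D) = M * X - 4 * (M * Z)" unfolding a2' by (simp add: algebra_simps)
  have b2: "M * X - 4 * X \<le> M * Y - 4 * Y" using a1 by (simp add: M_def X_def Y_def algebra_simps)
  have b3: "M * Y - 4 * (M * Z) \<le> 4 * Y" using mu(3) by (simp add: M_def Y_def Z_def algebra_simps)
  have b4: "X \<le> (real n + 2) * (real n + 3)" by (simp add: X_def power2_eq_square)
  have "M * (4 * D) \<le> 4 * ((real n + 2) * (real n + 3))" using b1 b2 b3 b4 by linarith
  hence "mu^2 * (4 * D) \<le> 4 * ((real n + 2) * (real n + 3))" by (simp add: M_def)
  hence md: "mu^2 * D \<le> (real n + 2) * (real n + 3)" by simp
  have c2: "C2 * D = C0 * (real n + 1) * (real n + 2)" using id by (simp add: C0_def C2_def D_def)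
  have "C0 * (real n + 1) * mu^2 * D \<le> C0 * (real n + 1) * ((real n + 2) * (real n + 3))"
    using md C0p by (simp add: mult.assoc mult_left_mono)
  also have "\<dots> = C2 * D * (real n + 3)" using c2 by (simp add: algebra_simps)
  finally have "(C0 * (real n + 1) * mu^2) * D \<le> (C2 * (real n + 3)) * D" by (simp add: ac_simps)
  hence "C0 * (real n + 1) * mu^2 \<le> C2 * (real n + 3)" using Dp mult_le_cancel_right_pos by blast
  hence "C0 * (real n + 1) * mu^2 / mu^(n+2) \<le> C2 * (real n + 3) / mu^(n+2)"
    using mu by (intro divide_right_mono) auto
  moreover have "C0 * (real n + 1) * mu^2 / mu^(n+2) = C0 * (real n + 1) / mu^n"
    using mu by (simp add: power_add power2_eq_square field_simps)
  ultimately show ?thesis unfolding GG_def using k2 by (simp add: C0_def C2_def k_def add.commute)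
qed

lemma GG_mono:
  fixes mu :: real
  assumes mu: "mu > 0" "4 \<le> mu^2" "mu^2 * (real N^2 - 4 * real hh^2) \<le> 4 * real N^2"
  shows "even n \<Longrightarrow> 2*hh \<le> n \<Longrightarrow> n + 2*d \<le> N \<Longrightarrow> GG mu hh n \<le> GG mu hh (n + 2*d)"
proof (induction d)
  case 0 thus ?case by simp
next
  case (Suc d)
  have "GG mu hh n \<le> GG mu hh (n + 2*d)" using Suc by simp
  also have "\<dots> \<le> GG mu hh (n + 2*d + 2)" using Suc.prems by (intro GG_step[OF mu]) auto
  finally show ?case by (simp add: add.assoc)
qed

lemma binom_bound:
  fixes mu :: real
  assumes mu: "mu > 0" "4 \<le> mu^2" "mu^2 * (real N^2 - 4 * real hh^2) \<le> 4 * real N^2"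
    and n: "even n" "2*hh \<le> n" "n \<le> N" and N: "even N"
  shows "real (n choose (n div 2 - hh)) * mu^(N - n) \<le> real (N + 1) * real (N choose (N div 2 - hh))"
proof -
  have NN: "N = n + 2 * ((N - n) div 2)" using n N by auto
  have "GG mu hh n \<le> GG mu hh N" using GG_mono[OF mu n(1,2), of "(N - n) div 2"] NN by simp
  hence "real (n choose (n div 2 - hh)) * real (n + 1) / mu ^ n \<le> real (N choose (N div 2 - hh)) * real (N + 1) / mu ^ N"
    by (simp add: GG_def)
  hence "real (n choose (n div 2 - hh)) * real (n + 1) * mu^(N-n) \<le> real (N choose (N div 2 - hh)) * real (N + 1)"
    using mu n by (simp add: field_simps power_diff)
  moreover have "real (n choose (n div 2 - hh)) * mu^(N-n) * 1 \<le> real (n choose (n div 2 - hh)) * mu^(N-n) * real (n + 1)"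
    by (intro mult_left_mono) (use mu in auto)
  ultimately show ?thesis by (simp add: algebra_simps)
qed

lemma finite_lenle: "finite {w::bool list. length w \<le> N}"
  using finite_lists_length_le[of "UNIV::bool set" N] by simp

lemma upper:
  fixes lam mu :: real and g :: "int \<Rightarrow> real" and hh N :: nat
  assumes hh: "hh > 0" and lam: "lam > 0" and mu: "mu > 0" "4 \<le> mu^2"
    "mu^2 * (real N^2 - 4 * real hh^2) \<le> 4 * real N^2"
    and gnn: "\<And>y. 0 \<le> y \<Longrightarrow> g y \<ge> 0" and g0: "g 0 > 0"
    and gp: "\<And>y. 0 \<le> y \<Longrightarrow> g (y+1) + (if 1 \<le> y then (if y = 1 then lam else 1) * g (y-1) else 0) \<le> mu * g y"
    and N: "even N"
  shows "(\<Sum>bs\<in>CB (int hh) N. lam ^ zc (hts (int hh) bs)) \<le> lam * real (N+1)^2 * real (N choose (N div 2 - hh))"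
proof -
  let ?h = "int hh"
  define T where "T = {(p,w,r). FP ?h p \<and> w \<in> Mid (length w) \<and> RP ?h r \<and> length p + length w + length r = N}"
  define L where "L = {w::bool list. length w \<le> N}"
  have fL: "finite L" using finite_lenle by (simp add: L_def)
  have fT: "finite T"
    by (rule finite_subset[of _ "L \<times> L \<times> L"]) (auto simp: T_def L_def intro!: finite_cartesian_product fL[unfolded L_def])
  define gl where "gl = (\<lambda>(p::bool list,w::bool list,r::bool list). p @ w @ r)"
  define f where "f = (\<lambda>bs. lam ^ zc (hts ?h bs))"
  have fnn: "\<And>x. 0 \<le> f x" using lam by (simp add: f_def)
  have sub: "CB ?h N \<subseteq> gl ` T"
  proof
    fix bs assume bs: "bs \<in> CB ?h N"
    obtain p w r where d: "bs = p @ w @ r" "FP ?h p" "w \<in> Mid (length w)" "RP ?h r"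
      using decomp[OF _ bs] hh by auto
    have "length bs = N" using bs by (simp add: CB_def PB_def)
    hence "(p,w,r) \<in> T" using d by (simp add: T_def)
    thus "bs \<in> gl ` T" using d by (force simp: gl_def)
  qed
  have "(\<Sum>bs\<in>CB ?h N. f bs) \<le> (\<Sum>bs\<in>gl ` T. f bs)"
    by (rule sum_mono2) (use sub fT fnn in auto)
  also have "\<dots> \<le> sum (f \<circ> gl) T" by (rule sum_image_le[OF fT]) (simp add: fnn)
  also have "\<dots> = (\<Sum>t\<in>T. lam ^ zc (hts 0 (fst (snd t))))"
  proof (rule sum.cong[OF refl])
    fix t assume "t \<in> T"
    then obtain p w r where t: "t = (p,w,r)" "FP ?h p" "w \<in> Mid (length w)" "RP ?h r" by (auto simp: T_def)
    have "ssum w = 0" using t by (simp add: Mid_def)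
    thus "(f \<circ> gl) t = lam ^ zc (hts 0 (fst (snd t)))" using zc_glue[OF t(2) _ t(4)] t(1) by (simp add: f_def gl_def)
  qed
  also have "\<dots> = (\<Sum>t\<in>T. (\<lambda>(w,s). lam ^ zc (hts 0 w)) ((\<lambda>(p,w,r). (w, p @ map Not r)) t))"
    by (intro sum.cong) auto
  also have "\<dots> = sum (\<lambda>(w,s). lam ^ zc (hts 0 w)) ((\<lambda>(p,w,r). (w, p @ map Not r)) ` T)"
  proof (rule sum.reindex[symmetric, unfolded comp_def])
    show "inj_on (\<lambda>(p, w, r). (w, p @ map Not r)) T"
    proof (rule inj_onI)
      fix t1 t2 assume t1: "t1 \<in> T" and t2: "t2 \<in> T" and e: "(\<lambda>(p, w, r). (w, p @ map Not r)) t1 = (\<lambda>(p, w, r). (w, p @ map Not r)) t2"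
      obtain p1 w1 r1 where 1: "t1 = (p1,w1,r1)" "FP ?h p1" using t1 by (auto simp: T_def)
      obtain p2 w2 r2 where 2: "t2 = (p2,w2,r2)" "FP ?h p2" using t2 by (auto simp: T_def)
      have w: "w1 = w2" and pr: "p1 @ map Not r1 = p2 @ map Not r2" using e 1 2 by auto
      have p: "p1 = p2" using FP_unique[OF 1(2) 2(2) pr] .
      hence "map Not r1 = map Not r2" using pr by simp
      hence "r1 = r2" by (simp add: inj_def)
      thus "t1 = t2" using 1 2 w p by simp
    qed
  qed
  also have "\<dots> \<le> sum (\<lambda>(w,s). lam ^ zc (hts 0 w)) (SIGMA w:{w. length w \<le> N \<and> w \<in> Mid (length w)}. SS ?h (N - length w))"
  proof (rule sum_mono2)
    show "finite (SIGMA w:{w. length w \<le> N \<and> w \<in> Mid (length w)}. SS ?h (N - length w))"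
      by (rule finite_SigmaI) (auto intro: finite_subset[OF _ fL] finite_SS simp: L_def)
    show "(\<lambda>(p, w, r). (w, p @ map Not r)) ` T \<subseteq> (SIGMA w:{w. length w \<le> N \<and> w \<in> Mid (length w)}. SS ?h (N - length w))"
      by (auto simp: T_def SS_def FP_def RP_def)
  qed (use lam in auto)
  also have "\<dots> = (\<Sum>w\<in>{w. length w \<le> N \<and> w \<in> Mid (length w)}. \<Sum>s\<in>SS ?h (N - length w). lam ^ zc (hts 0 w))"
    by (rule sum.Sigma[symmetric]) (auto intro: finite_subset[OF _ fL] finite_SS simp: L_def)
  also have "\<dots> = (\<Sum>w\<in>(\<Union>m\<in>{..N}. Mid m). real (card (SS ?h (N - length w))) * lam ^ zc (hts 0 w))"
    by (intro sum.cong) (auto simp: Mid_def)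
  also have "\<dots> = (\<Sum>m\<in>{..N}. \<Sum>w\<in>Mid m. real (card (SS ?h (N - length w))) * lam ^ zc (hts 0 w))"
    by (rule sum.UNION_disjoint) (simp_all add: finite_Mid, auto simp: Mid_def)
  also have "\<dots> = (\<Sum>m\<in>{..N}. real (card (SS ?h (N - m))) * (\<Sum>w\<in>Mid m. lam ^ zc (hts 0 w)))"
    by (intro sum.cong refl) (auto simp: sum_distrib_left Mid_def)
  also have "\<dots> \<le> (\<Sum>m\<in>{..N}. real (card (SS ?h (N - m))) * (lam * mu ^ m))"
    by (intro sum_mono mult_left_mono W_bound[OF lam _ gnn g0 gp]) (use mu in auto)
  also have "\<dots> \<le> (\<Sum>m\<in>{..N}. lam * (real (N + 1) * real (N choose (N div 2 - hh))))"
  proof (intro sum_mono)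
    fix m assume m: "m \<in> {..N}"
    have cm: "real (card (SS ?h (N - m))) * mu ^ m \<le> real (N + 1) * real (N choose (N div 2 - hh))"
    proof (cases "SS ?h (N - m) = {}")
      case True thus ?thesis by simp
    next
      case False
      then obtain s where "s \<in> SS ?h (N - m)" by auto
      from SS_nonempty[OF this] have c: "even (N - m)" "2 * hh \<le> N - m" by auto
      have "card (SS ?h (N - m)) = (N - m) choose ((N - m) div 2 - hh)"
        using card_SS[of ?h "N - m"] c by simp
      moreover have "N - (N - m) = m" using m by simp
      ultimately show ?thesis using binom_bound[OF mu c(1) c(2) _ N, of] by (metis diff_le_self)
    qed
    show "real (card (SS ?h (N - m))) * (lam * mu ^ m) \<le> lam * (real (N + 1) * real (N choose (N div 2 - hh)))"
      using mult_left_mono[OF cm, of lam] lam by (simp add: ac_simps)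
  qed
  also have "\<dots> = lam * real (N+1)^2 * real (N choose (N div 2 - hh))"
    by (simp add: power2_eq_square algebra_simps)
  finally show ?thesis by (simp add: f_def)
qed

definition fhit :: "int \<Rightarrow> bool list \<Rightarrow> nat" where
  "fhit h s = (LEAST i. i \<le> length s \<and> hts h s ! i \<le> 0)"

lemma fhit_props:
  assumes h: "h > 0" and s: "ssum s \<le> -h"
  shows "FP h (take (fhit h s) s) \<and> ssum (take (fhit h s) s) = -h \<and> fhit h s \<le> length s"
proof -
  define H where "H = hts h s"
  define P where "P i \<longleftrightarrow> i \<le> length s \<and> H ! i \<le> 0" for i
  have PN: "P (length s)" using s by (simp add: P_def H_def nth_hts)
  define i1 where "i1 = fhit h s"
  have i1L: "i1 = (LEAST i. P i)" by (simp add: i1_def fhit_def P_def H_def)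
  have P1: "P i1" unfolding i1L by (rule LeastI[of P, OF PN])
  have before: "0 < H ! j" if j: "j < i1" for j
  proof (rule ccontr)
    assume "\<not> 0 < H ! j"
    hence "P j" using j P1 by (simp add: P_def)
    hence "i1 \<le> j" unfolding i1L by (rule Least_le)
    thus False using j by simp
  qed
  have H0: "H ! 0 = h" by (simp add: H_def nth_hts)
  have i1p: "i1 > 0" using P1 H0 h by (cases i1) (auto simp: P_def)
  then obtain k where k: "i1 = Suc k" by (cases i1) auto
  have "0 < H ! k" using before k by simp
  moreover have "\<bar>H ! Suc k - H ! k\<bar> = 1" unfolding H_def using P1 k by (intro hts_step) (simp add: P_def)
  ultimately have z: "H ! i1 = 0" using P1 k by (simp add: P_def)
  have Hi: "H ! i1 = h + ssum (take i1 s)" unfolding H_def using P1 by (intro nth_hts) (simp add: P_def)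
  have sp: "ssum (take i1 s) = -h" using z Hi by simp
  have "butlast (hts h (take i1 s)) = take i1 H" using P1
    by (simp add: hts_take H_def butlast_take P_def)
  moreover have "\<forall>v\<in>set (take i1 H). 0 < v"
  proof
    fix v assume "v \<in> set (take i1 H)"
    then obtain j where j: "j < i1" "v = H ! j" using P1 by (auto simp: in_set_conv_nth P_def H_def)
    thus "0 < v" using before by simp
  qed
  ultimately show ?thesis using sp P1 by (simp add: FP_def i1_def P_def)
qed

definition PS :: "bool list \<Rightarrow> nat \<Rightarrow> int" where "PS q t = ssum (take t q)"
definition tstar :: "bool list \<Rightarrow> nat" where
  "tstar q = (GREATEST t. t \<le> length q \<and> PS q t = Max (PS q ` {..length q}))"
definition rot :: "nat \<Rightarrow> bool list \<Rightarrow> bool list" where "rot t q = drop t q @ take t q"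

lemma rot_props:
  assumes h: "h > 0" and q: "ssum q = -h"
  shows "tstar q < length q \<and> RP h (map Not (rot (tstar q) q))"
proof -
  define n where "n = length q"
  define M where "M = Max (PS q ` {..n})"
  define Q where "Q t \<longleftrightarrow> t \<le> n \<and> PS q t = M" for t
  have Mge: "PS q t \<le> M" if "t \<le> n" for t unfolding M_def using that by (intro Max_ge) auto
  have "M \<in> PS q ` {..n}" unfolding M_def by (intro Max_in) auto
  then obtain t0 where t0: "Q t0" by (auto simp: Q_def)
  have bnd: "\<And>t. Q t \<Longrightarrow> t \<le> n" by (simp add: Q_def)
  have ts: "tstar q = (GREATEST t. Q t)" by (simp add: tstar_def Q_def M_def n_def)
  define t where "t = tstar q"
  have Qt: "Q t" unfolding t_def ts by (rule GreatestI_nat[of Q, OF t0 bnd])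
  have gt: "PS q j < M" if j: "t < j" "j \<le> n" for j
  proof -
    have "\<not> Q j"
    proof
      assume "Q j"
      hence "j \<le> t" unfolding t_def ts by (rule Greatest_le_nat[of Q j n, OF _ bnd])
      thus False using j by simp
    qed
    thus ?thesis using Mge[OF j(2)] j by (auto simp: Q_def)
  qed
  have PSn: "PS q n = -h" using q by (simp add: PS_def n_def)
  have PS0: "PS q 0 = 0" by (simp add: PS_def)
  have tn: "t < n"
  proof (rule ccontr)
    assume "\<not> t < n"
    hence "t = n" using Qt by (simp add: Q_def)
    hence "M = -h" using Qt PSn by (simp add: Q_def)
    moreover have "0 \<le> M" using Mge[of 0] PS0 by simp
    ultimately show False using h by simp
  qed
  define q' where "q' = rot t q"
  have lq': "length q' = n" using tn by (simp add: q'_def rot_def n_def)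
  have neg: "ssum (take j q') < 0" if j: "1 \<le> j" "j \<le> n" for j
  proof (cases "j \<le> n - t")
    case True
    have "take j q' = take j (drop t q)" using True tn by (simp add: q'_def rot_def n_def)
    moreover have "take (t + j) q = take t q @ take j (drop t q)" by (simp add: take_add)
    hence "ssum (take j (drop t q)) = PS q (t + j) - PS q t" by (simp add: PS_def)
    moreover have "PS q (t + j) < M" using gt[of "t+j"] True j tn by simp
    ultimately show ?thesis using Qt by (simp add: Q_def)
  next
    case False
    define j' where "j' = j - (n - t)"
    have j't: "j' \<le> t" using j by (simp add: j'_def)
    have "take j q' = drop t q @ take j' (take t q)" using False tn
      by (simp add: q'_def rot_def n_def j'_def)
    also have "take j' (take t q) = take j' q" using j't by (simp add: min_absorb1)
    finally have "ssum (take j q') = (ssum q - PS q t) + PS q j'"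
    proof -
      assume e: "take j q' = drop t q @ take j' q"
      have "ssum q = ssum (take t q) + ssum (drop t q)"
        using ssum_append[of "take t q" "drop t q"] by simp
      thus ?thesis using e by (simp add: PS_def)
    qed
    moreover have "PS q j' \<le> M" using Mge[of j'] j't tn by simp
    ultimately show ?thesis using q h Qt by (simp add: Q_def)
  qed
  have "ssum (map Not q') = h"
  proof -
    have "ssum q = ssum (take t q) + ssum (drop t q)"
      using ssum_append[of "take t q" "drop t q"] by simp
    hence "ssum q' = ssum q" by (simp add: q'_def rot_def add.commute)
    thus ?thesis using q by simp
  qed
  moreover have "\<forall>v\<in>set (tl (hts 0 (map Not q'))). 0 < v"
  proof
    fix v assume "v \<in> set (tl (hts 0 (map Not q')))"
    then obtain i where i: "i < n" "v = tl (hts 0 (map Not q')) ! i" using lq' by (auto simp: in_set_conv_nth)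
    have "v = hts 0 (map Not q') ! Suc i" using i lq' by (simp add: nth_tl)
    also have "\<dots> = ssum (take (Suc i) (map Not q'))" using i lq' by (simp add: nth_hts)
    also have "\<dots> = - ssum (take (Suc i) q')" by (simp add: take_map)
    finally show "0 < v" using neg[of "Suc i"] i by simp
  qed
  ultimately show ?thesis using tn by (simp add: RP_def t_def q'_def n_def)
qed

lemma glue_BDB:
  assumes "FP h p" "RP h r"
  shows "p @ r \<in> BDB h (length p + length r)"
proof -
  have e: "hts h (p @ r) = butlast (hts h p) @ hts 0 r" using assms by (simp add: hts_append FP_def)
  have hr: "hts 0 r = 0 # tl (hts 0 r)" by (rule hts_hd)
  have pos1: "\<forall>v\<in>set (butlast (hts h p)). 0 < v" using assms by (simp add: FP_def)
  have pos2: "\<forall>v\<in>set (tl (hts 0 r)). 0 < v" using assms by (simp add: RP_def)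
  have "\<forall>v\<in>set (hts h (p @ r)). 0 \<le> v"
  proof
    fix v assume "v \<in> set (hts h (p @ r))"
    hence "v \<in> set (butlast (hts h p)) \<or> v = 0 \<or> v \<in> set (tl (hts 0 r))" unfolding e
      by (subst (asm) hr) auto
    thus "0 \<le> v" using pos1 pos2 by force
  qed
  moreover have "zc (hts h (p @ r)) = 1"
  proof -
    have "zc (hts h (p @ r)) = zc (butlast (hts h p)) + zc (0 # tl (hts 0 r))" unfolding e by (subst hr) simp
    thus ?thesis using zc_pos[OF pos1] zc_pos[OF pos2] by simp
  qed
  moreover have "ssum (p @ r) = 0" using assms by (simp add: FP_def RP_def)
  ultimately show ?thesis by (simp add: BDB_def PB_def)
qed

lemma finite_BDB: "finite (BDB h N)"
  by (rule finite_subset[OF _ finite_len[of N]]) (auto simp: BDB_def PB_def)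

lemma lower:
  assumes h: "h > 0"
  shows "card (SS h N) \<le> N * card (BDB h N)"
proof -
  define Phi where "Phi s = (let i = fhit h s; q = drop i s in (take i s @ map Not (rot (tstar q) q), tstar q))" for s
  have props: "FP h (take (fhit h s) s) \<and> RP h (map Not (rot (tstar (drop (fhit h s) s)) (drop (fhit h s) s)))
     \<and> tstar (drop (fhit h s) s) < length (drop (fhit h s) s) \<and> fhit h s \<le> N" if s: "s \<in> SS h N" for s
  proof -
    have ss: "ssum s = -2*h" "length s = N" using s by (auto simp: SS_def)
    have f: "FP h (take (fhit h s) s)" "ssum (take (fhit h s) s) = -h" "fhit h s \<le> length s"
      using fhit_props[OF h] ss h by auto
    have "ssum s = ssum (take (fhit h s) s) + ssum (drop (fhit h s) s)"
      using ssum_append[of "take (fhit h s) s" "drop (fhit h s) s"] by simp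
    hence "ssum (drop (fhit h s) s) = -h" using f(2) ss(1) by simp
    note r = rot_props[OF h this]
    show ?thesis using r f ss by simp
  qed
  have "inj_on Phi (SS h N)"
  proof (rule inj_onI)
    fix s1 s2 assume s1: "s1 \<in> SS h N" and s2: "s2 \<in> SS h N" and e: "Phi s1 = Phi s2"
    define i1 where "i1 = fhit h s1"
    define i2 where "i2 = fhit h s2"
    define q1 where "q1 = drop i1 s1"
    define q2 where "q2 = drop i2 s2"
    have p1: "FP h (take i1 s1)" and p2: "FP h (take i2 s2)" using props[OF s1] props[OF s2] by (auto simp: i1_def i2_def)
    have e1: "take i1 s1 @ map Not (rot (tstar q1) q1) = take i2 s2 @ map Not (rot (tstar q2) q2)"
      and e2: "tstar q1 = tstar q2"
    proof -
      have P1: "Phi s1 = (take i1 s1 @ map Not (rot (tstar q1) q1), tstar q1)" unfolding Phi_def Let_def i1_def q1_def ..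
      have P2: "Phi s2 = (take i2 s2 @ map Not (rot (tstar q2) q2), tstar q2)" unfolding Phi_def Let_def i2_def q2_def ..
      show "take i1 s1 @ map Not (rot (tstar q1) q1) = take i2 s2 @ map Not (rot (tstar q2) q2)"
        using arg_cong[OF e, of fst] unfolding P1 P2 fst_conv .
      show "tstar q1 = tstar q2"
        using arg_cong[OF e, of snd] unfolding P1 P2 snd_conv .
    qed
    have pe: "take i1 s1 = take i2 s2" using FP_unique[OF p1 p2 e1] .
    hence "map Not (rot (tstar q1) q1) = map Not (rot (tstar q2) q2)" using e1 by simp
    hence re: "rot (tstar q1) q1 = rot (tstar q2) q2" by (simp add: inj_def)
    have l1: "length q1 = length q2"
    proof -
      have "length (take i1 s1) = length (take i2 s2)" using pe by simp
      thus ?thesis using s1 s2 by (simp add: q1_def q2_def SS_def)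
    qed
    define t where "t = tstar q1"
    have "drop t q1 @ take t q1 = drop t q2 @ take t q2" using re e2 by (simp add: rot_def t_def)
    moreover have "length (drop t q1) = length (drop t q2)" using l1 by simp
    ultimately have "drop t q1 = drop t q2" "take t q1 = take t q2" by auto
    hence "q1 = q2" by (metis append_take_drop_id)
    thus "s1 = s2" using pe by (metis append_take_drop_id i1_def i2_def q1_def q2_def)
  qed
  moreover have "Phi ` SS h N \<subseteq> BDB h N \<times> {..<N}"
  proof
    fix x assume "x \<in> Phi ` SS h N"
    then obtain s where s: "s \<in> SS h N" "x = Phi s" by auto
    have l: "length s = N" using s by (simp add: SS_def)
    have pr: "FP h (take (fhit h s) s)" "RP h (map Not (rot (tstar (drop (fhit h s) s)) (drop (fhit h s) s)))"
      "tstar (drop (fhit h s) s) < length (drop (fhit h s) s)" "fhit h s \<le> N" using props[OF s(1)] by auto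
    have "length (take (fhit h s) s) + length (map Not (rot (tstar (drop (fhit h s) s)) (drop (fhit h s) s))) = N"
      using pr(3,4) l by (simp add: rot_def)
    thus "x \<in> BDB h N \<times> {..<N}" using glue_BDB[OF pr(1,2)] pr(3) l s(2) by (auto simp: Phi_def Let_def)
  qed
  ultimately have "card (SS h N) \<le> card (BDB h N \<times> {..<N})"
    by (intro card_inj_on_le) (auto intro: finite_BDB)
  thus ?thesis by (simp add: card_cartesian_product mult.commute)
qed

lemma even_ceil_eq: "even_ceil s = 2 * \<lceil>s / 2\<rceil>"
  unfolding even_ceil_def
proof (rule Least_equality)
  show "even (2 * \<lceil>s / 2\<rceil>) \<and> s \<le> real_of_int (2 * \<lceil>s / 2\<rceil>)"
  proof -
    have "s / 2 \<le> real_of_int \<lceil>s / 2\<rceil>" by (rule le_of_int_ceiling)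
    hence "s \<le> 2 * real_of_int \<lceil>s / 2\<rceil>" by linarith
    thus ?thesis by simp
  qed
next
  fix k :: int assume k: "even k \<and> s \<le> real_of_int k"
  then obtain j where j: "k = 2 * j" by (auto elim: evenE)
  have "s / 2 \<le> real_of_int j" using k j by simp
  hence "\<lceil>s / 2\<rceil> \<le> j" by (simp add: ceiling_le_iff)
  thus "2 * \<lceil>s / 2\<rceil> \<le> k" using j by simp
qed

lemma even_ceil_ge: "s \<le> real_of_int (even_ceil s)"
proof -
  have "s / 2 \<le> real_of_int \<lceil>s / 2\<rceil>" by (rule le_of_int_ceiling)
  hence "s \<le> 2 * real_of_int \<lceil>s / 2\<rceil>" by linarith
  thus ?thesis unfolding even_ceil_eq by simp
qed

lemma hd_hts: "hd (hts y b) = y" by (cases b) auto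

lemma hts_inj: "length b1 = length b2 \<Longrightarrow> hts y b1 = hts y b2 \<Longrightarrow> b1 = b2"
proof (induction b1 arbitrary: b2 y)
  case Nil thus ?case by simp
next
  case (Cons x b1)
  then obtain z b2' where b2: "b2 = z # b2'" by (cases b2) auto
  have e: "hts (if x then y + 1 else y - 1) b1 = hts (if z then y + 1 else y - 1) b2'"
    using Cons.prems b2 by simp
  have "(if x then y + 1 else y - 1) = (if z then y + 1 else y - 1)"
    using arg_cong[OF e, of hd] unfolding hd_hts .
  hence xz: "x = z" by (auto split: if_splits)
  hence "b1 = b2'" using Cons.IH[of b2'] e Cons.prems b2 by simp
  thus ?case using b2 xz by simp
qed

definition incs :: "nat \<Rightarrow> int list \<Rightarrow> bool list" where
  "incs N \<eta> = map (\<lambda>i. \<eta> ! i < \<eta> ! Suc i) [0..<N]"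

lemma incs_heights:
  assumes l: "length \<eta> = N + 1" and st: "\<forall>x<N. \<bar>\<eta> ! (x + 1) - \<eta> ! x\<bar> = 1"
  shows "j \<le> N \<Longrightarrow> \<eta> ! j = \<eta> ! 0 + ssum (take j (incs N \<eta>))"
proof (induction j)
  case 0 thus ?case by simp
next
  case (Suc j)
  have jN: "j < N" using Suc.prems by simp
  have "ssum (take (Suc j) (incs N \<eta>)) = ssum (take j (incs N \<eta>)) + (if incs N \<eta> ! j then 1 else -1)"
    using jN by (intro ssum_take_Suc) (simp add: incs_def)
  moreover have "incs N \<eta> ! j = (\<eta> ! j < \<eta> ! Suc j)" using jN by (simp add: incs_def)
  moreover have "\<bar>\<eta> ! Suc j - \<eta> ! j\<bar> = 1" using st jN by simp
  ultimately show ?case using Suc jN by (auto simp: abs_if split: if_splits)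
qed

lemma paths_eq:
  assumes h: "h = even_ceil (a * real N)"
  shows "paths a N = hts h ` PB h N"
proof
  show "paths a N \<subseteq> hts h ` PB h N"
  proof
    fix \<eta> assume e: "\<eta> \<in> paths a N"
    have l: "length \<eta> = N + 1" and st: "\<forall>x<N. \<bar>\<eta> ! (x + 1) - \<eta> ! x\<bar> = 1"
      and e0: "\<eta> ! 0 = h" and eN: "\<eta> ! N = h" and nn: "\<forall>x\<le>N. 0 \<le> \<eta> ! x"
      using e h by (auto simp: paths_def)
    define bs where "bs = incs N \<eta>"
    have lb: "length bs = N" by (simp add: bs_def incs_def)
    have eq: "hts h bs = \<eta>"
    proof (rule nth_equalityI)
      show "length (hts h bs) = length \<eta>" using l lb by simp
      fix j assume "j < length (hts h bs)"
      hence j: "j \<le> N" using lb by simp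
      show "hts h bs ! j = \<eta> ! j" using incs_heights[OF l st j] e0 j lb by (simp add: nth_hts bs_def)
    qed
    have "bs \<in> PB h N"
    proof -
      have "\<forall>v\<in>set (hts h bs). 0 \<le> v" using nn l eq by (auto simp: in_set_conv_nth)
      moreover have "ssum bs = 0" using incs_heights[OF l st, of N] e0 eN lb by (simp add: bs_def)
      ultimately show ?thesis using lb by (simp add: PB_def)
    qed
    thus "\<eta> \<in> hts h ` PB h N" using eq by force
  qed
next
  show "hts h ` PB h N \<subseteq> paths a N"
  proof
    fix \<eta> assume "\<eta> \<in> hts h ` PB h N"
    then obtain bs where bs: "bs \<in> PB h N" "\<eta> = hts h bs" by auto
    have lb: "length bs = N" and nn: "\<forall>v\<in>set (hts h bs). 0 \<le> v" and s0: "ssum bs = 0"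
      using bs by (auto simp: PB_def)
    have "\<forall>x\<le>N. 0 \<le> \<eta> ! x" using nn lb bs(2) by (auto intro: nth_mem)
    moreover have "\<eta> ! 0 = h" using bs(2) by (simp add: nth_hts)
    moreover have "\<eta> ! N = h" using bs(2) lb s0 by (simp add: nth_hts)
    moreover have "\<forall>x<N. \<bar>\<eta> ! (x + 1) - \<eta> ! x\<bar> = 1" using bs(2) lb hts_step by simp
    ultimately show "\<eta> \<in> paths a N" using lb bs(2) h by (simp add: paths_def)
  qed
qed

lemma contacts_zc: "length bs = N \<Longrightarrow> contacts N (hts h bs) = zc (hts h bs)"
proof -
  assume l: "length bs = N"
  have "{x. x \<le> N \<and> hts h bs ! x = 0} = {i. i < length (hts h bs) \<and> hts h bs ! i = 0}" using l by auto
  thus ?thesis by (simp add: contacts_def zc_def length_filter_conv_card)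
qed

lemma two_h_le:
  assumes bs: "bs \<in> CB h N"
  shows "2 * h \<le> int N"
proof -
  have l: "length bs = N" and s0: "ssum bs = 0" and z: "0 \<in> set (hts h bs)" using bs by (auto simp: CB_def PB_def)
  obtain i where i: "i < Suc N" "hts h bs ! i = 0" using z l by (auto simp: in_set_conv_nth)
  have "h + ssum (take i bs) = 0" using i l nth_hts[of i bs h] by simp
  moreover have "ssum bs = ssum (take i bs) + ssum (drop i bs)" using ssum_append[of "take i bs" "drop i bs"] by simp
  moreover have "\<bar>ssum (take i bs)\<bar> \<le> int (length (take i bs))" by (rule abs_ssum_le)
  moreover have "\<bar>ssum (drop i bs)\<bar> \<le> int (length (drop i bs))" by (rule abs_ssum_le)
  ultimately show ?thesis using s0 l i by simp
qed

lemma main_N: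
  fixes a lam mu :: real and g :: "int \<Rightarrow> real" and N :: nat
  assumes a: "0 < a" "a < 1/2" and lam: "0 < lam"
    and mu: "mu > 0" "4 \<le> mu^2" "mu^2 * (1 - 4 * a^2) \<le> 4"
    and g0: "g 0 > 0" and gnn: "\<And>y. 0 \<le> y \<Longrightarrow> g y \<ge> 0"
    and gp: "\<And>y. 0 \<le> y \<Longrightarrow> g (y+1) + (if 1 \<le> y then (if y = 1 then lam else 1) * g (y-1) else 0) \<le> mu * g y"
    and N: "N > 0" "even N" and ne: "check_paths a N \<noteq> {}"
  shows "pin lam a N (bd_check_paths a N) / pin lam a N (check_paths a N) \<ge> (1/4) / real N ^ 3"
proof -
  define h where "h = even_ceil (a * real N)"
  have hge: "a * real N \<le> real_of_int h" unfolding h_def by (rule even_ceil_ge)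
  have aN: "a * real N > 0" using a N by simp
  have hpos: "h > 0" using hge aN by linarith
  define hh where "hh = nat h"
  have hhh: "h = int hh" using hpos by (simp add: hh_def)
  have hh0: "hh > 0" using hpos hhh by simp
  have P: "paths a N = hts h ` PB h N" using paths_eq h_def by simp
  have inj: "inj_on (hts h) (PB h N)" by (rule inj_onI) (auto simp: PB_def intro: hts_inj)
  have chk: "check_paths a N = hts h ` CB h N"
  proof -
    have "(\<exists>x\<le>N. hts h bs ! x = 0) \<longleftrightarrow> 0 \<in> set (hts h bs)" if "length bs = N" for bs
      using that by (auto simp: in_set_conv_nth less_Suc_eq_le)
    thus ?thesis unfolding check_paths_def CB_def P by (auto simp: PB_def)
  qed
  have bdp: "bd_check_paths a N = hts h ` BDB h N"
    unfolding bd_check_paths_def BDB_def P by (auto simp: PB_def contacts_zc)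
  have CBsub: "CB h N \<subseteq> PB h N" and BDsub: "BDB h N \<subseteq> PB h N" by (auto simp: CB_def BDB_def)
  have fPB: "finite (PB h N)" by (rule finite_subset[OF _ finite_len[of N]]) (auto simp: PB_def)
  define Sc where "Sc = (\<Sum>bs\<in>CB h N. lam ^ zc (hts h bs))"
  define Z where "Z = (\<Sum>\<eta>\<in>paths a N. lam ^ contacts N \<eta>)"
  have sc_eq: "(\<Sum>\<eta>\<in>check_paths a N \<inter> paths a N. lam ^ contacts N \<eta>) = Sc"
  proof -
    have "check_paths a N \<inter> paths a N = hts h ` CB h N" using chk by (auto simp: check_paths_def)
    hence "(\<Sum>\<eta>\<in>check_paths a N \<inter> paths a N. lam ^ contacts N \<eta>) = (\<Sum>bs\<in>CB h N. lam ^ contacts N (hts h bs))"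
      using sum.reindex[OF inj_on_subset[OF inj CBsub], of "\<lambda>\<eta>. lam ^ contacts N \<eta>"] by simp
    also have "\<dots> = Sc" unfolding Sc_def by (intro sum.cong refl) (auto simp: CB_def PB_def contacts_zc)
    finally show ?thesis .
  qed
  have sb_eq: "(\<Sum>\<eta>\<in>bd_check_paths a N \<inter> paths a N. lam ^ contacts N \<eta>) = lam * real (card (BDB h N))"
  proof -
    have "bd_check_paths a N \<inter> paths a N = hts h ` BDB h N" using bdp by (auto simp: bd_check_paths_def)
    hence "(\<Sum>\<eta>\<in>bd_check_paths a N \<inter> paths a N. lam ^ contacts N \<eta>) = (\<Sum>bs\<in>BDB h N. lam ^ contacts N (hts h bs))"
      using sum.reindex[OF inj_on_subset[OF inj BDsub], of "\<lambda>\<eta>. lam ^ contacts N \<eta>"] by simp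
    also have "\<dots> = (\<Sum>bs\<in>BDB h N. lam)" by (intro sum.cong refl) (auto simp: BDB_def PB_def contacts_zc)
    finally show ?thesis by simp
  qed
  obtain bs0 where bs0: "bs0 \<in> CB h N" using ne chk by auto
  have fCB: "finite (CB h N)" using finite_subset[OF CBsub fPB] .
  have Scp: "Sc > 0"
  proof -
    have "0 < lam ^ zc (hts h bs0)" using lam by simp
    also have "\<dots> \<le> Sc" unfolding Sc_def using bs0 fCB lam by (intro member_le_sum) auto
    finally show ?thesis .
  qed
  have Zp: "Z > 0"
  proof -
    have "Sc \<le> Z"
    proof -
      have "Sc = (\<Sum>\<eta>\<in>check_paths a N \<inter> paths a N. lam ^ contacts N \<eta>)" using sc_eq by simp
      also have "\<dots> \<le> Z" unfolding Z_def using P fPB lam by (intro sum_mono2) auto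
      finally show ?thesis .
    qed
    thus ?thesis using Scp by simp
  qed
  have ratio: "pin lam a N (bd_check_paths a N) / pin lam a N (check_paths a N) = lam * real (card (BDB h N)) / Sc"
    unfolding pin_def sc_eq sb_eq Z_def[symmetric] using Zp by simp
  have h2: "2 * h \<le> int N" by (rule two_h_le[OF bs0])
  define Cb where "Cb = real (N choose (N div 2 - hh))"
  have Cbp: "Cb > 0" by (simp add: Cb_def)
  have mu3: "mu^2 * (real N^2 - 4 * real hh^2) \<le> 4 * real N^2"
  proof -
    have "(a * real N)^2 \<le> real hh^2" using hge hhh aN by (intro power_mono) auto
    hence "mu^2 * (real N^2 - 4 * real hh^2) \<le> mu^2 * (real N^2 - 4 * (a * real N)^2)"
      by (intro mult_left_mono) auto
    also have "\<dots> = (mu^2 * (1 - 4 * a^2)) * real N^2" by (simp add: algebra_simps power_mult_distrib)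
    also have "\<dots> \<le> 4 * real N^2" using mu(3) by (intro mult_right_mono) auto
    finally show ?thesis .
  qed
  have up: "Sc \<le> lam * real (N+1)^2 * Cb"
    unfolding Sc_def Cb_def hhh using upper[OF hh0 lam mu(1,2) mu3 gnn g0 gp N(2)] .
  have lo: "Cb \<le> real N * real (card (BDB h N))"
  proof -
    have "card (SS h N) = N choose (N div 2 - nat h)" using card_SS[of h N] hpos N h2 by simp
    moreover have "card (SS h N) \<le> N * card (BDB h N)" by (rule lower[OF hpos])
    ultimately show ?thesis unfolding Cb_def hh_def by (metis of_nat_le_iff of_nat_mult)
  qed
  have "lam * (Cb / real N) / (lam * real (N+1)^2 * Cb) \<le> lam * real (card (BDB h N)) / Sc"
  proof (rule frac_le)
    show "0 \<le> lam * real (card (BDB h N))" using lam by simp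
    show "lam * (Cb / real N) \<le> lam * real (card (BDB h N))"
      using lo N lam by (intro mult_left_mono) (auto simp: field_simps)
    show "0 < Sc" by (rule Scp)
    show "Sc \<le> lam * real (N+1)^2 * Cb" by (rule up)
  qed
  moreover have "lam * (Cb / real N) / (lam * real (N+1)^2 * Cb) = 1 / (real N * real (N+1)^2)"
    using lam Cbp N by (simp add: field_simps)
  moreover have "(1/4) / real N ^ 3 \<le> 1 / (real N * real (N+1)^2)"
  proof -
    have "real (N+1) \<le> 2 * real N" using N by simp
    hence "real (N+1)^2 \<le> (2 * real N)^2" by (intro power_mono) auto
    hence "real N * real (N+1)^2 \<le> real N * (2 * real N)^2" by (intro mult_left_mono) auto
    hence "real N * real (N+1)^2 \<le> 4 * real N ^ 3" by (simp add: power2_eq_square power3_eq_cube algebra_simps)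
    thus ?thesis using N by (simp add: field_simps)
  qed
  ultimately show ?thesis using ratio by simp
qed

lemma pin_nonneg: "lam > 0 \<Longrightarrow> 0 \<le> pin lam a N A"
  unfolding pin_def by (intro divide_nonneg_nonneg sum_nonneg) auto

theorem lemma4p5:
  fixes a lam :: real
  assumes "0 < a" "a < 1/2" "0 < lam" "lam \<le> 2 / (1 - 2 * a)"
  shows "\<exists>C>0. \<forall>N::nat. even N \<and> check_paths a N \<noteq> {} \<longrightarrow>
           pin lam a N (bd_check_paths a N) / pin lam a N (check_paths a N) \<ge> C / real N ^ 3"
proof -
  obtain mu g where pot: "mu > 0" "4 \<le> mu^2" "mu^2 * (1 - 4 * a^2) \<le> 4" "g 0 > (0::real)"
    "\<forall>y\<ge>0. g y \<ge> 0"
    "\<forall>y::int\<ge>0. g (y+1) + (if 1 \<le> y then (if y = 1 then lam else 1) * g (y-1) else 0) \<le> mu * g y"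
    using exists_pot[OF assms] by blast
  show ?thesis
  proof (intro exI[of _ "1/4"] conjI allI impI)
    show "(0::real) < 1/4" by simp
    fix N :: nat assume NN: "even N \<and> check_paths a N \<noteq> {}"
    show "pin lam a N (bd_check_paths a N) / pin lam a N (check_paths a N) \<ge> (1/4) / real N ^ 3"
    proof (cases "N = 0")
      case True
      thus ?thesis using pin_nonneg[OF assms(3)] by (simp add: divide_nonneg_nonneg)
    next
      case False
      show ?thesis
        by (rule main_N[where g=g, OF assms(1,2,3) pot(1,2,3,4)]) (use pot(5,6) NN False in auto)
    qed
  qed
qed

end
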